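(* Let $\rho\in(0,1)$, $\phi:(0,1)\to\mathbb{R}_+$, $\alpha\geqslant0$, and let $\{\psi_t\}_{t\geqslant0}$ be a preconditioned first-order method satisfying $(\rho,\phi(\rho),\alpha)$-linear convergence. Then for any $x_0\in\mathbb{R}^d$, $m\geqslant1$ and $S\in\mathbb{R}^{m\times n}$ such that $\|C_S-I_d\|_2\leqslant\sqrt\rho$, the iterates $x_{t+1}=\psi_t(x_0,\dots,x_t;H_S)$ satisfy, for all $t\geqslant0$, $$\widetilde\delta_t\leqslant c(\alpha,\rho)\,\phi(\rho)^t\,\widetilde\delta_0,$$ where $\widetilde\delta_t=\frac12\nabla f(x_t)^\top H_S^{-1}\nabla f(x_t)$ and $c(\alpha,\rho)=\frac{1+\sqrt\rho}{1-\sqrt\rho}\,\alpha$.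
   Context: Let $A\in\mathbb{R}^{n\times d}$ with $n\geqslant d$, $b\in\mathbb{R}^d$, $\Lambda\in\mathbb{R}^{d\times d}$ diagonal with $\Lambda\succeq I_d$, and $\nu>0$. Set $H=A^\top A+\nu^2\Lambda$, $f(x)=\frac12 x^\top Hx-b^\top x$, $x^*=H^{-1}b$. For $S\in\mathbb{R}^{m\times n}$ set $H_S=A^\top S^\top SA+\nu^2\Lambda$ and $C_S=H^{-1/2}H_SH^{-1/2}$. For an iterate $x_t$, $\delta_t=\frac12\|x_t-x^*\|_H^2$ with $\|z\|_H^2=z^\top Hz$. A preconditioned first-order method is a sequence of functions $\{\psi_t\}_{t\geqslant0}$ such that for any preconditioner $P\succ0$ and any $x_0\in\mathbb{R}^d$ the iterates $x_{t+1}=\psi_t(x_0,\dots,x_t;P)$ satisfy $x_{t+1}\in x_0+P^{-1}\,\mathrm{span}\{\nabla f(x_0),\dots,\nabla f(x_t)\}$ for all $t\geqslant0$. It satisfies $(\rho,\phi(\rho),\alpha)$-linear convergence if for every $x_0\in\mathbb{R}^d$, $m\geqslant1$ and $S\in\mathbb{R}^{m\times n}$ with $\|C_S-I_d\|_2\leqslant\max\{\sqrt\rho,\rho\}$, the iterates $x_{t+1}=\psi_t(x_0,\dots,x_t;H_S)$ satisfy $\delta_t\leqslant\alpha\,\phi(\rho)^t\,\delta_0$ for all $t\geqslant0$. *)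

theory Defs
  imports "HOL-Analysis.Analysis"
begin

text \<open>Matrices: A is n x d as real^'d^'n (rows indexed by 'n). Square d x d matrices are real^'d^'d.\<close>

definition psd_mat :: "real^'d^'d \<Rightarrow> bool" where
  "psd_mat M \<longleftrightarrow> transpose M = M \<and> (\<forall>x. 0 \<le> x \<bullet> (M *v x))"

definition pd_mat :: "real^'d^'d \<Rightarrow> bool" where
  "pd_mat M \<longleftrightarrow> transpose M = M \<and> (\<forall>x. x \<noteq> 0 \<longrightarrow> 0 < x \<bullet> (M *v x))"

definition diag_mat :: "real^'d^'d \<Rightarrow> bool" where
  "diag_mat M \<longleftrightarrow> (\<forall>i j. i \<noteq> j \<longrightarrow> M $ i $ j = 0)"

definition inv_sqrt_mat :: "real^'d^'d \<Rightarrow> real^'d^'d" where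
  "inv_sqrt_mat H = (THE M. psd_mat M \<and> M ** M = matrix_inv H)"

definition Hmat :: "real^'d^'n \<Rightarrow> real^'d^'d \<Rightarrow> real \<Rightarrow> real^'d^'d" where
  "Hmat A Lam nu = transpose A ** A + (nu^2) *\<^sub>R Lam"

text \<open>A sketch S in R^(m x n) is given by m and its rows S 0, ..., S (m-1) in R^n.
  sgram m S is S^T S.\<close>
definition sgram :: "nat \<Rightarrow> (nat \<Rightarrow> real^'n) \<Rightarrow> real^'n^'n" where
  "sgram m S = (\<chi> i j. \<Sum>k<m. S k $ i * S k $ j)"

definition HSmat :: "real^'d^'n \<Rightarrow> real^'d^'d \<Rightarrow> real \<Rightarrow> nat \<Rightarrow> (nat \<Rightarrow> real^'n) \<Rightarrow> real^'d^'d" where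
  "HSmat A Lam nu m S = transpose A ** sgram m S ** A + (nu^2) *\<^sub>R Lam"

definition CSmat :: "real^'d^'n \<Rightarrow> real^'d^'d \<Rightarrow> real \<Rightarrow> nat \<Rightarrow> (nat \<Rightarrow> real^'n) \<Rightarrow> real^'d^'d" where
  "CSmat A Lam nu m S =
     inv_sqrt_mat (Hmat A Lam nu) ** HSmat A Lam nu m S ** inv_sqrt_mat (Hmat A Lam nu)"

definition spec_norm :: "real^'d^'d \<Rightarrow> real" where
  "spec_norm M = onorm (\<lambda>x. M *v x)"

definition fobj :: "real^'d^'n \<Rightarrow> real^'d^'d \<Rightarrow> real \<Rightarrow> real^'d \<Rightarrow> real^'d \<Rightarrow> real" where
  "fobj A Lam nu b x = (1/2) * (x \<bullet> (Hmat A Lam nu *v x)) - b \<bullet> x"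

text \<open>Gradient of f (f is quadratic with symmetric H): grad f(x) = H x - b.\<close>
definition gradf :: "real^'d^'n \<Rightarrow> real^'d^'d \<Rightarrow> real \<Rightarrow> real^'d \<Rightarrow> real^'d \<Rightarrow> real^'d" where
  "gradf A Lam nu b x = Hmat A Lam nu *v x - b"

definition xstar :: "real^'d^'n \<Rightarrow> real^'d^'d \<Rightarrow> real \<Rightarrow> real^'d \<Rightarrow> real^'d" where
  "xstar A Lam nu b = matrix_inv (Hmat A Lam nu) *v b"

definition delta :: "real^'d^'n \<Rightarrow> real^'d^'d \<Rightarrow> real \<Rightarrow> real^'d \<Rightarrow> real^'d \<Rightarrow> real" where
  "delta A Lam nu b x =
     (1/2) * ((x - xstar A Lam nu b) \<bullet> (Hmat A Lam nu *v (x - xstar A Lam nu b)))"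

definition delta_tilde :: "real^'d^'n \<Rightarrow> real^'d^'d \<Rightarrow> real \<Rightarrow> real^'d \<Rightarrow> nat \<Rightarrow> (nat \<Rightarrow> real^'n) \<Rightarrow> real^'d \<Rightarrow> real" where
  "delta_tilde A Lam nu b m S x =
     (1/2) * (gradf A Lam nu b x \<bullet> (matrix_inv (HSmat A Lam nu m S) *v gradf A Lam nu b x))"

text \<open>A method is psi :: nat => (iterate history list) => preconditioner => next iterate.
  hist psi P x0 t = [x_0, ..., x_t], with x_(t+1) = psi t [x_0,...,x_t] P.\<close>
fun hist :: "(nat \<Rightarrow> 'v list \<Rightarrow> 'p \<Rightarrow> 'v) \<Rightarrow> 'p \<Rightarrow> 'v \<Rightarrow> nat \<Rightarrow> 'v list" where
  "hist psi P x0 0 = [x0]"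
| "hist psi P x0 (Suc t) = hist psi P x0 t @ [psi t (hist psi P x0 t) P]"

definition iter :: "(nat \<Rightarrow> 'v list \<Rightarrow> 'p \<Rightarrow> 'v) \<Rightarrow> 'p \<Rightarrow> 'v \<Rightarrow> nat \<Rightarrow> 'v" where
  "iter psi P x0 t = hist psi P x0 t ! t"

definition precond_first_order ::
  "real^'d^'n \<Rightarrow> real^'d^'d \<Rightarrow> real \<Rightarrow> real^'d \<Rightarrow>
   (nat \<Rightarrow> (real^'d) list \<Rightarrow> real^'d^'d \<Rightarrow> real^'d) \<Rightarrow> bool" where
  "precond_first_order A Lam nu b psi \<longleftrightarrow>
     (\<forall>P x0 t. pd_mat P \<longrightarrow>
        iter psi P x0 (Suc t) - x0 \<in>
          (\<lambda>v. matrix_inv P *v v) ` span {gradf A Lam nu b (iter psi P x0 k) | k. k \<le> t})"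

definition linear_conv ::
  "real^'d^'n \<Rightarrow> real^'d^'d \<Rightarrow> real \<Rightarrow> real^'d \<Rightarrow>
   (nat \<Rightarrow> (real^'d) list \<Rightarrow> real^'d^'d \<Rightarrow> real^'d) \<Rightarrow> real \<Rightarrow> real \<Rightarrow> real \<Rightarrow> bool" where
  "linear_conv A Lam nu b psi rho phirho alpha \<longleftrightarrow>
     (\<forall>x0 m S. m \<ge> 1 \<longrightarrow>
        spec_norm (CSmat A Lam nu m S - mat 1) \<le> max (sqrt rho) rho \<longrightarrow>
        (\<forall>t. delta A Lam nu b (iter psi (HSmat A Lam nu m S) x0 t)
              \<le> alpha * phirho ^ t * delta A Lam nu b x0))"

end

theory Submission imports Defs begin

lemma dot_mv_transpose: "x \<bullet> (A *v y) = (transpose A *v x) \<bullet> (y::real^'n)"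
  for A :: "real^'n^'m"
  by (simp add: dot_lmul_matrix)

lemma sym_dot: "transpose A = A \<Longrightarrow> x \<bullet> (A *v y) = (A *v x) \<bullet> (y::real^'n)"
  for A :: "real^'n^'n"
  by (metis dot_mv_transpose)

lemma sym_from_dot:
  fixes A :: "real^'n^'n"
  assumes "\<And>x y. x \<bullet> (A *v y) = (A *v x) \<bullet> y"
  shows "transpose A = A"
proof -
  have "transpose A *v y = A *v y" for y
  proof -
    have "x \<bullet> (transpose A *v y - A *v y) = 0" for x
      using assms[of x y] dot_mv_transpose[of x "transpose A" y]
      by (simp add: inner_diff_right)
    from this[of "transpose A *v y - A *v y"] show ?thesis by simp
  qed
  then show ?thesis by (simp add: matrix_eq)
qed

lemma minv:
  fixes A :: "real^'n^'n"
  assumes "invertible A"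
  shows "A ** matrix_inv A = mat 1" "matrix_inv A ** A = mat 1"
proof -
  have "\<exists>A'. A ** A' = mat 1 \<and> A' ** A = mat 1" using assms unfolding invertible_def by blast
  then have "A ** matrix_inv A = mat 1 \<and> matrix_inv A ** A = mat 1"
    unfolding matrix_inv_def by (rule someI_ex)
  then show "A ** matrix_inv A = mat 1" "matrix_inv A ** A = mat 1" by auto
qed

lemma pd_invertible:
  fixes A :: "real^'n^'n"
  assumes "\<And>x. x \<noteq> 0 \<Longrightarrow> 0 < x \<bullet> (A *v x)"
  shows "invertible A"
proof -
  have "\<forall>x. A *v x = 0 \<longrightarrow> x = 0"
    using assms by (metis inner_zero_right less_irrefl)
  then show ?thesis
    using invertible_left_inverse matrix_left_invertible_ker by blast
qed

lemma minv_apply: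
  fixes A :: "real^'n^'n"
  assumes "invertible A"
  shows "A *v (matrix_inv A *v x) = x" "matrix_inv A *v (A *v x) = x"
  using minv[OF assms] by (simp_all add: matrix_vector_mul_assoc)

lemma inner_sum_orth:
  fixes B :: "(real^'n) set"
  assumes "finite B" "pairwise orthogonal B" "\<forall>b\<in>B. norm b = 1" "c \<in> B"
  shows "c \<bullet> (\<Sum>b\<in>B. g b *\<^sub>R b) = g c"
proof -
  have "c \<bullet> (\<Sum>b\<in>B. g b *\<^sub>R b) = (\<Sum>b\<in>B. g b * (c \<bullet> b))"
    by (simp add: inner_sum_right)
  also have "\<dots> = g c * (c \<bullet> c) + (\<Sum>b\<in>B-{c}. g b * (c \<bullet> b))"
    using assms by (simp add: sum.remove)
  also have "(\<Sum>b\<in>B-{c}. g b * (c \<bullet> b)) = 0"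
    using assms(2,4) by (intro sum.neutral) (auto simp: pairwise_def orthogonal_def)
  also have "c \<bullet> c = 1" using assms(3,4) by (metis norm_eq_1)
  finally show ?thesis by simp
qed

lemma orth_expand:
  fixes B :: "(real^'n) set"
  assumes "finite B" "pairwise orthogonal B" "\<forall>b\<in>B. norm b = 1" "span B = UNIV"
  shows "x = (\<Sum>b\<in>B. (b \<bullet> x) *\<^sub>R b)"
proof -
  define y where "y = x - (\<Sum>b\<in>B. (b \<bullet> x) *\<^sub>R b)"
  have "orthogonal y c" if "c \<in> B" for c
    using inner_sum_orth[OF assms(1-3) that, of "\<lambda>b. b \<bullet> x"] that
    unfolding y_def orthogonal_def by (simp add: inner_diff_left inner_diff_right inner_commute)
  then have "orthogonal y y" using orthogonal_to_span[of y B y] assms(4) by auto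
  then have "y = 0" by (simp add: orthogonal_def)
  then show ?thesis unfolding y_def by simp
qed


lemma quad_nonneg_zero:
  fixes a b :: real
  assumes "\<And>t. 0 \<le> 2 * t * a + t^2 * b" "a \<ge> 0" "b \<ge> 0"
  shows "a = 0"
proof (rule ccontr)
  assume "a \<noteq> 0"
  then have a: "a > 0" using assms by simp
  define t where "t = - a / (b + 1)"
  have h: "0 \<le> 2 * t * a + t^2 * b" by (rule assms(1))
  have "(b+1)^2 * (2 * t * a + t^2 * b) = a^2 * (- b - 2)"
  proof -
    have tb: "t * (b+1) = -a" unfolding t_def using assms(3) by simp
    have "(b+1)^2 * (2 * t * a + t^2 * b) = 2*a*(b+1)*(t*(b+1)) + b*(t*(b+1))^2"
      by (simp add: algebra_simps power2_eq_square)
    also have "\<dots> = a^2 * (- b - 2)" unfolding tb by (simp add: algebra_simps power2_eq_square)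
    finally show ?thesis .
  qed
  moreover have "0 \<le> (b+1)^2 * (2 * t * a + t^2 * b)" using h by simp
  moreover have "a^2 * (- b - 2) < 0" using a assms(3) by (intro mult_pos_neg) auto
  ultimately show False by linarith
qed

lemma quad_aux:
  fixes ww t a1 rr wKw l a2 a3 :: real
  assumes "ww = 1 + 2*t*a1 + t^2*rr" "wKw = l + 2*t*a2 + t^2*a3" "rr = l*a1 - a2"
    "0 \<le> l*ww - wKw"
  shows "0 \<le> 2*t*rr + t^2*(l*rr - a3)"
proof -
  have "l*ww - wKw = 2*t*rr + t^2*(l*rr - a3)" unfolding assms(1,2) assms(3) by (simp add: algebra_simps)
  then show ?thesis using assms(4) by simp
qed

lemma spectral_sub:
  fixes K :: "real^'n^'n"
  assumes symK: "transpose K = K"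
  shows "subspace U \<Longrightarrow> (\<forall>u\<in>U. K *v u \<in> U) \<Longrightarrow>
    \<exists>B. B \<subseteq> U \<and> finite B \<and> pairwise orthogonal B \<and> (\<forall>b\<in>B. norm b = 1) \<and> span B = U
        \<and> (\<forall>b\<in>B. K *v b = (b \<bullet> (K *v b)) *\<^sub>R b)"
proof (induction "dim U" arbitrary: U rule: less_induct)
  case less
  show ?case
  proof (cases "U = {0}")
    case True
    then show ?thesis by (intro exI[of _ "{}"]) auto
  next
    case False
    then obtain u0 where u0: "u0 \<in> U" "u0 \<noteq> 0" using less.prems subspace_0 by blast
    define T where "T = U \<inter> sphere 0 1"
    have "compact T" unfolding T_def
      by (intro closed_Int_compact closed_subspace less.prems compact_sphere)
    moreover have "T \<noteq> {}"
    proof -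
      have "(1 / norm u0) *\<^sub>R u0 \<in> T" unfolding T_def using u0 less.prems
        by (auto simp: subspace_scale)
      then show ?thesis by blast
    qed
    moreover have "continuous_on T (\<lambda>x. x \<bullet> (K *v x))"
      by (intro continuous_intros continuous_on_id linear_continuous_on
          matrix_vector_mul_bounded_linear)
    ultimately have "\<exists>x\<in>T. \<forall>y\<in>T. y \<bullet> (K *v y) \<le> x \<bullet> (K *v x)"
      by (rule continuous_attains_sup)
    then obtain v where vT: "v \<in> T" and vmax: "\<And>y. y \<in> T \<Longrightarrow> y \<bullet> (K *v y) \<le> v \<bullet> (K *v v)"
      by blast
    define l where "l = v \<bullet> (K *v v)"
    have vU: "v \<in> U" and vn: "norm v = 1" using vT unfolding T_def by auto
    have vv: "v \<bullet> v = 1" using vn by (simp add: norm_eq_1)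
    have qpos: "0 \<le> l * (u \<bullet> u) - u \<bullet> (K *v u)" if "u \<in> U" for u
    proof (cases "u = 0")
      case True then show ?thesis by simp
    next
      case False
      define w where "w = (1 / norm u) *\<^sub>R u"
      have "w \<in> T" unfolding T_def w_def using that False less.prems by (auto simp: subspace_scale)
      then have "w \<bullet> (K *v w) \<le> l" using vmax l_def by auto
      then have "(u \<bullet> (K *v u)) / (norm u)^2 \<le> l"
        unfolding w_def by (simp add: matrix_vector_mult_scaleR power2_eq_square)
      then have "u \<bullet> (K *v u) \<le> l * (norm u)^2" using False by (simp add: divide_le_eq)
      then show ?thesis by (simp add: power2_norm_eq_inner)
    qed
    define r where "r = l *\<^sub>R v - K *v v"
    have rU: "r \<in> U" unfolding r_def using less.prems vU
      by (simp add: subspace_diff subspace_scale)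
    have "0 \<le> 2 * t * (r \<bullet> r) + t^2 * (l * (r \<bullet> r) - r \<bullet> (K *v r))" for t
    proof -
      have "v + t *\<^sub>R r \<in> U" using vU rU less.prems by (simp add: subspace_add subspace_scale)
      from qpos[OF this] have "0 \<le> l * ((v + t *\<^sub>R r) \<bullet> (v + t *\<^sub>R r)) - (v + t *\<^sub>R r) \<bullet> (K *v (v + t *\<^sub>R r))" .
      moreover have "r \<bullet> (K *v v) = v \<bullet> (K *v r)" using sym_dot[OF symK, of v r] by (simp add: inner_commute)
      moreover have "(v + t *\<^sub>R r) \<bullet> (v + t *\<^sub>R r) = v \<bullet> v + 2 * t * (v \<bullet> r) + t^2 * (r \<bullet> r)"
        by (simp add: inner_add_left inner_add_right inner_commute power2_eq_square)
      moreover have "(v + t *\<^sub>R r) \<bullet> (K *v (v + t *\<^sub>R r)) = v \<bullet> (K *v v) + t * (v \<bullet> (K *v r)) + t * (r \<bullet> (K *v v)) + t^2 * (r \<bullet> (K *v r))"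
        by (simp add: inner_add_left inner_add_right matrix_vector_right_distrib matrix_vector_mult_scaleR power2_eq_square algebra_simps)
      moreover have "r \<bullet> r = l * (v \<bullet> r) - r \<bullet> (K *v v)"
        unfolding r_def by (simp add: inner_diff_left inner_diff_right inner_commute algebra_simps)
      ultimately show ?thesis
        using vv quad_aux[of "(v + t *\<^sub>R r) \<bullet> (v + t *\<^sub>R r)" t "v \<bullet> r" "r \<bullet> r"
            "(v + t *\<^sub>R r) \<bullet> (K *v (v + t *\<^sub>R r))" l "v \<bullet> (K *v r)" "r \<bullet> (K *v r)"]
        unfolding l_def[symmetric] by simp
    qed
    then have "r \<bullet> r = 0"
      by (rule quad_nonneg_zero) (use qpos[OF rU] in auto)
    then have Kv: "K *v v = l *\<^sub>R v" unfolding r_def by simp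
    define U' where "U' = {u \<in> U. v \<bullet> u = 0}"
    have subU': "subspace U'" unfolding U'_def using less.prems
      by (auto simp: subspace_def inner_add_right)
    have invU': "\<forall>u\<in>U'. K *v u \<in> U'"
    proof
      fix u assume u: "u \<in> U'"
      have "v \<bullet> (K *v u) = (K *v v) \<bullet> u" by (rule sym_dot[OF symK])
      also have "\<dots> = 0" using u Kv unfolding U'_def by simp
      finally show "K *v u \<in> U'" using u less.prems unfolding U'_def by auto
    qed
    have "U' \<subseteq> U" unfolding U'_def by auto
    moreover have "v \<notin> U'" using vv unfolding U'_def by auto
    ultimately have "U' \<subset> U" using vU by blast
    then have "dim U' < dim U"
      using dim_psubset subU' less.prems span_eq_iff by metis
    from less.hyps[OF this subU' invU'] obtain B' where B':
      "B' \<subseteq> U'" "finite B'" "pairwise orthogonal B'" "\<forall>b\<in>B'. norm b = 1" "span B' = U'"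
      "\<forall>b\<in>B'. K *v b = (b \<bullet> (K *v b)) *\<^sub>R b" by blast
    have vB': "v \<notin> B'" using B'(1) vv unfolding U'_def by auto
    show ?thesis
    proof (intro exI[of _ "insert v B'"] conjI)
      show "insert v B' \<subseteq> U" using B'(1) vU unfolding U'_def by auto
      show "finite (insert v B')" using B' by simp
      show "pairwise orthogonal (insert v B')"
        using B'(1,3) unfolding pairwise_insert U'_def
        by (auto simp: orthogonal_def inner_commute)
      show "\<forall>b\<in>insert v B'. norm b = 1" using B' vn by auto
      show "\<forall>b\<in>insert v B'. K *v b = (b \<bullet> (K *v b)) *\<^sub>R b"
        using B'(6) Kv vv by (auto simp: l_def)
      show "span (insert v B') = U"
      proof
        show "span (insert v B') \<subseteq> U"
          using \<open>insert v B' \<subseteq> U\<close> less.prems by (simp add: span_minimal)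
        show "U \<subseteq> span (insert v B')"
        proof
          fix u assume u: "u \<in> U"
          have "u - (v \<bullet> u) *\<^sub>R v \<in> U'" unfolding U'_def using u vU less.prems vv
            by (auto simp: subspace_diff subspace_scale inner_diff_right)
          then show "u \<in> span (insert v B')" using B'(5) span_breakdown_eq by blast
        qed
      qed
    qed
  qed
qed


lemma psd_sqrt_unique:
  fixes K :: "real^'n^'n"
  assumes symK: "transpose K = K" and pdK: "\<And>x. x \<noteq> 0 \<Longrightarrow> 0 < x \<bullet> (K *v x)"
  shows "\<exists>!M. psd_mat M \<and> M ** M = K"
proof -
  obtain B where B: "finite B" "pairwise orthogonal B" "\<forall>b\<in>B. norm b = 1" "span B = UNIV"
    "\<forall>b\<in>B. K *v b = (b \<bullet> (K *v b)) *\<^sub>R b"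
    using spectral_sub[OF symK, of UNIV] subspace_UNIV by auto
  define lam where "lam b = b \<bullet> (K *v b)" for b
  have lampos: "lam b > 0" if "b \<in> B" for b
    using pdK[of b] B(3) that unfolding lam_def by fastforce
  have Kb: "K *v b = lam b *\<^sub>R b" if "b \<in> B" for b using B(5) that unfolding lam_def by auto
  have expand: "x = (\<Sum>b\<in>B. (b \<bullet> x) *\<^sub>R b)" for x by (rule orth_expand[OF B(1-4)])
  define f where "f x = (\<Sum>b\<in>B. (sqrt (lam b) * (b \<bullet> x)) *\<^sub>R b)" for x
  have linf: "linear f" unfolding f_def
    by (rule linearI) (simp_all add: inner_add_right sum.distrib scaleR_add_left algebra_simps
        scaleR_sum_right)
  define M where "M = matrix f"
  have Mf: "M *v x = f x" for x unfolding M_def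
    by (rule matrix_works) (simp add: linear_matrix_vector_mul_eq linf)
  have inf: "c \<bullet> f x = sqrt (lam c) * (c \<bullet> x)" if "c \<in> B" for c x
    unfolding f_def by (rule inner_sum_orth[OF B(1-3) that])
  have dotM: "x \<bullet> (M *v y) = (\<Sum>b\<in>B. sqrt (lam b) * (b \<bullet> x) * (b \<bullet> y))" for x y
    unfolding Mf f_def by (simp add: inner_sum_right algebra_simps inner_commute)
  have symM: "transpose M = M"
    by (rule sym_from_dot) (simp add: dotM inner_commute[of "M *v _"] mult.commute mult.left_commute)
  have psdM: "psd_mat M" unfolding psd_mat_def
  proof (intro conjI allI symM)
    fix x show "0 \<le> x \<bullet> (M *v x)" unfolding dotM
      using lampos by (intro sum_nonneg) (simp add: mult.assoc less_imp_le zero_le_mult_iff)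
  qed
  have MMK: "M ** M = K"
  proof -
    have "(M ** M) *v x = K *v x" for x
    proof -
      have "(M ** M) *v x = f (f x)" by (simp add: Mf flip: matrix_vector_mul_assoc)
      also have "\<dots> = (\<Sum>b\<in>B. (lam b * (b \<bullet> x)) *\<^sub>R b)"
        unfolding f_def[of "f x"] using lampos
        by (intro sum.cong refl) (simp add: inf mult.assoc[symmetric] less_imp_le)
      also have "\<dots> = K *v x"
        apply (subst (2) expand[of x])
        by (simp add: real_vector.linear_sum[OF matrix_vector_mul_linear] matrix_vector_mult_scaleR Kb mult.commute)
      finally show ?thesis .
    qed
    then show ?thesis by (simp add: matrix_eq)
  qed
  show ?thesis
  proof (rule ex1I[of _ M])
    show "psd_mat M \<and> M ** M = K" using psdM MMK by simp
  next
    fix M' assume M': "psd_mat M' \<and> M' ** M' = K"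
    have M'b: "M' *v b = sqrt (lam b) *\<^sub>R b" if "b \<in> B" for b
    proof -
      define s where "s = sqrt (lam b)"
      have s: "s > 0" "s * s = lam b" using lampos[OF that] unfolding s_def by auto
      define u where "u = M' *v b - s *\<^sub>R b"
      have "M' *v u = (M' ** M') *v b - s *\<^sub>R (M' *v b)"
        unfolding u_def by (simp add: matrix_vector_mult_diff_distrib matrix_vector_mult_scaleR
            flip: matrix_vector_mul_assoc)
      also have "\<dots> = (s * s) *\<^sub>R b - s *\<^sub>R (M' *v b)" using M' Kb[OF that] s by simp
      also have "\<dots> = - s *\<^sub>R u" unfolding u_def by (simp add: algebra_simps)
      finally have "u \<bullet> (M' *v u) = - s * (u \<bullet> u)" by simp
      moreover have "0 \<le> u \<bullet> (M' *v u)" using M' unfolding psd_mat_def by auto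
      ultimately have "u \<bullet> u \<le> 0" using s
        by (metis mult_minus_left neg_0_le_iff_le zero_le_mult_iff not_less)
      then have "u = 0" by (metis inner_ge_zero inner_eq_zero_iff order_antisym)
      then show ?thesis unfolding u_def s_def by simp
    qed
    have "M' *v x = M *v x" for x
    proof -
      have "M' *v x = (\<Sum>b\<in>B. (b \<bullet> x) *\<^sub>R (M' *v b))"
        apply (subst expand[of x])
        by (simp add: real_vector.linear_sum[OF matrix_vector_mul_linear] matrix_vector_mult_scaleR)
      also have "\<dots> = f x" unfolding f_def by (intro sum.cong refl) (simp add: M'b)
      finally show ?thesis by (simp add: Mf)
    qed
    then show "M' = M" by (simp add: matrix_eq)
  qed
qed


lemma inv_compare:
  fixes H P :: "real^'n^'n"
  assumes symH: "transpose H = H" and symP: "transpose P = P" and invP: "invertible P"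
    and Hpsd: "\<And>z. 0 \<le> z \<bullet> (H *v z)" and c: "c > 0" and C: "C > 0"
    and lo: "\<And>z. c * (z \<bullet> (H *v z)) \<le> z \<bullet> (P *v z)"
    and hi: "\<And>z. z \<bullet> (P *v z) \<le> C * (z \<bullet> (H *v z))"
  shows "(H *v u) \<bullet> (matrix_inv P *v (H *v u)) \<le> (u \<bullet> (H *v u)) / c"
    and "(u \<bullet> (H *v u)) / C \<le> (H *v u) \<bullet> (matrix_inv P *v (H *v u))"
proof -
  define g where "g = H *v u"
  define w where "w = matrix_inv P *v g"
  have Pw: "P *v w = g" unfolding w_def by (rule minv_apply(1)[OF invP])
  define q where "q = g \<bullet> w"
  define h where "h = u \<bullet> (H *v u)"
  have q1: "q = w \<bullet> (P *v w)" unfolding q_def Pw by (simp add: inner_commute)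
  have wHu: "w \<bullet> (H *v u) = q" unfolding q_def g_def by (simp add: inner_commute)
  have uHw: "u \<bullet> (H *v w) = q" using sym_dot[OF symH, of u w] wHu by (simp add: inner_commute)
  have "0 \<le> (c *\<^sub>R w - u) \<bullet> (H *v (c *\<^sub>R w - u))" by (rule Hpsd)
  also have "\<dots> = c^2 * (w \<bullet> (H *v w)) - 2*c*q + h"
    by (simp add: inner_diff_left inner_diff_right matrix_vector_mult_diff_distrib
        matrix_vector_mult_scaleR wHu uHw h_def power2_eq_square algebra_simps)
  finally have a1: "0 \<le> c^2 * (w \<bullet> (H *v w)) - 2*c*q + h" .
  have "c * (w \<bullet> (H *v w)) \<le> q" using lo[of w] q1 by simp
  then have "c * (c * (w \<bullet> (H *v w))) \<le> c * q" using c by (intro mult_left_mono) auto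
  then have "c * q \<le> h" using a1 by (simp add: power2_eq_square algebra_simps)
  then show "(H *v u) \<bullet> (matrix_inv P *v (H *v u)) \<le> (u \<bullet> (H *v u)) / c"
    using c unfolding q_def w_def g_def h_def by (simp add: pos_le_divide_eq mult.commute)
  define v where "v = (1/C) *\<^sub>R u"
  have Ppsd: "0 \<le> z \<bullet> (P *v z)" for z using lo[of z] Hpsd[of z] c
    by (meson mult_nonneg_nonneg less_imp_le order_trans)
  have vPw: "v \<bullet> (P *v w) = h / C" unfolding Pw v_def g_def h_def by simp
  have wPv: "w \<bullet> (P *v v) = h / C" using sym_dot[OF symP, of w v] vPw by (simp add: inner_commute)
  have vPv: "v \<bullet> (P *v v) \<le> h / C"
  proof -
    have "v \<bullet> (P *v v) = (1/C)^2 * (u \<bullet> (P *v u))" unfolding v_def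
      by (simp add: matrix_vector_mult_scaleR power2_eq_square)
    also have "\<dots> \<le> (1/C)^2 * (C * h)" unfolding h_def using hi[of u] by (intro mult_left_mono) auto
    also have "\<dots> = h / C" using C by (simp add: power2_eq_square field_simps)
    finally show ?thesis .
  qed
  have "0 \<le> (w - v) \<bullet> (P *v (w - v))" by (rule Ppsd)
  also have "\<dots> = q - h / C - h / C + v \<bullet> (P *v v)"
    by (simp add: inner_diff_left inner_diff_right matrix_vector_mult_diff_distrib q1 vPw wPv)
  finally have "h / C \<le> q" using vPv by linarith
  then show "(u \<bullet> (H *v u)) / C \<le> (H *v u) \<bullet> (matrix_inv P *v (H *v u))"
    unfolding q_def w_def g_def h_def .
qed


lemma sgram_sym: "transpose (sgram m S) = sgram m S"
  by (simp add: transpose_def sgram_def vec_eq_iff mult.commute)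

lemma sgram_psd: "0 \<le> z \<bullet> (sgram m S *v z)"
proof -
  have "z \<bullet> (sgram m S *v z) = (\<Sum>i\<in>UNIV. \<Sum>j\<in>UNIV. \<Sum>k<m. (z$i * S k $ i) * (S k $ j * z$j))"
    by (simp add: inner_vec_def matrix_vector_mult_def sgram_def sum_distrib_left sum_distrib_right
        algebra_simps)
  also have "\<dots> = (\<Sum>k<m. \<Sum>i\<in>UNIV. \<Sum>j\<in>UNIV. (z$i * S k $ i) * (S k $ j * z$j))"
    by (simp add: sum.swap[of _ "{..<m}"])
  also have "\<dots> = (\<Sum>k<m. (\<Sum>i\<in>UNIV. z$i * S k $ i) * (\<Sum>j\<in>UNIV. S k $ j * z$j))"
    by (simp add: sum_product)
  also have "\<dots> = (\<Sum>k<m. (\<Sum>i\<in>UNIV. z$i * S k $ i)^2)"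
    by (simp add: power2_eq_square mult.commute)
  also have "\<dots> \<ge> 0" by (intro sum_nonneg) simp
  finally show ?thesis .
qed

lemma vstar_dot: "x \<bullet> (z v* A) = (A *v x) \<bullet> (z::real^'m)" for A :: "real^'n^'m"
  by (metis dot_lmul_matrix inner_commute)

lemma H_dot: "x \<bullet> (Hmat A Lam nu *v y) = (A *v x) \<bullet> (A *v y) + nu^2 * (x \<bullet> (Lam *v y))"
  unfolding Hmat_def
  by (simp add: matrix_vector_mult_add_rdistrib inner_add_right vstar_dot
      flip: matrix_vector_mul_assoc scaleR_matrix_vector_assoc)

lemma HS_dot: "x \<bullet> (HSmat A Lam nu m S *v y) = (A *v x) \<bullet> (sgram m S *v (A *v y)) + nu^2 * (x \<bullet> (Lam *v y))"
  unfolding HSmat_def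
  by (simp add: matrix_vector_mult_add_rdistrib inner_add_right vstar_dot
      flip: matrix_vector_mul_assoc scaleR_matrix_vector_assoc)


theorem corollary2p5:
  fixes A :: "real^'d^'n" and b :: "real^'d" and Lam :: "real^'d^'d" and nu :: real
    and rho :: real and phi :: "real \<Rightarrow> real" and alpha :: real
    and psi :: "nat \<Rightarrow> (real^'d) list \<Rightarrow> real^'d^'d \<Rightarrow> real^'d"
    and x0 :: "real^'d" and m :: nat and S :: "nat \<Rightarrow> real^'n"
  assumes "CARD('d) \<le> CARD('n)"
    and "diag_mat Lam" and "psd_mat (Lam - mat 1)" and "nu > 0"
    and "0 < rho" and "rho < 1"
    and "\<forall>r. 0 < r \<and> r < 1 \<longrightarrow> phi r > 0"
    and "alpha \<ge> 0"
    and "precond_first_order A Lam nu b psi"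
    and "linear_conv A Lam nu b psi rho (phi rho) alpha"
    and "m \<ge> 1"
    and "spec_norm (CSmat A Lam nu m S - mat 1) \<le> sqrt rho"
  shows "\<forall>t. delta_tilde A Lam nu b m S (iter psi (HSmat A Lam nu m S) x0 t)
           \<le> ((1 + sqrt rho) / (1 - sqrt rho) * alpha) * phi rho ^ t
              * delta_tilde A Lam nu b m S x0"
proof
  fix t
  define s where "s = sqrt rho"
  have s0: "0 < s" and s1: "s < 1" using assms(5,6) unfolding s_def by auto
  have rhos: "rho \<le> s"
  proof -
    have "rho = s * s" unfolding s_def using assms(5) by simp
    also have "\<dots> \<le> s * 1" using s0 s1 by (intro mult_left_mono) auto
    finally show ?thesis by simp
  qed
  define H where "H = Hmat A Lam nu"
  define P where "P = HSmat A Lam nu m S"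
  define M where "M = inv_sqrt_mat H"
  define K where "K = matrix_inv H"
  define C where "C = CSmat A Lam nu m S"
  have C_def': "C = M ** P ** M" unfolding C_def CSmat_def M_def H_def P_def ..
  have L1: "transpose (Lam - mat 1) = Lam - mat 1" "\<And>x. 0 \<le> x \<bullet> ((Lam - mat 1) *v x)"
    using assms(3) unfolding psd_mat_def by auto
  have Lge: "x \<bullet> x \<le> x \<bullet> (Lam *v x)" for x
    using L1(2)[of x] by (simp add: matrix_vector_mult_diff_rdistrib inner_diff_right)
  have Lsym: "x \<bullet> (Lam *v y) = y \<bullet> (Lam *v x)" for x y
  proof -
    have "x \<bullet> ((Lam - mat 1) *v y) = ((Lam - mat 1) *v x) \<bullet> y" by (rule sym_dot[OF L1(1)])
    then show ?thesis by (simp add: matrix_vector_mult_diff_rdistrib inner_diff_right inner_diff_left inner_commute)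
  qed
  have nu2: "nu^2 > 0" using assms(4) by simp
  have symH: "transpose H = H" unfolding H_def
  proof (rule sym_from_dot)
    fix x y
    show "x \<bullet> (Hmat A Lam nu *v y) = (Hmat A Lam nu *v x) \<bullet> y"
      by (simp add: H_dot inner_commute[of "Hmat A Lam nu *v x"] inner_commute[of "A *v x"] Lsym[of x y])
  qed
  have symP: "transpose P = P" unfolding P_def
  proof (rule sym_from_dot)
    fix x y
    have "(A *v x) \<bullet> (sgram m S *v (A *v y)) = (A *v y) \<bullet> (sgram m S *v (A *v x))"
      using sym_dot[OF sgram_sym, of "A *v x" m S "A *v y"] by (simp add: inner_commute)
    then show "x \<bullet> (HSmat A Lam nu m S *v y) = (HSmat A Lam nu m S *v x) \<bullet> y"
      by (simp add: HS_dot inner_commute[of "HSmat A Lam nu m S *v x"] Lsym[of x y])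
  qed
  have Hge: "nu^2 * (x \<bullet> x) \<le> x \<bullet> (H *v x)" for x
  proof -
    have "nu^2 * (x \<bullet> x) \<le> nu^2 * (x \<bullet> (Lam *v x))" using Lge[of x] nu2 by (intro mult_left_mono) auto
    then show ?thesis unfolding H_def H_dot using inner_ge_zero[of "A *v x"] by linarith
  qed
  have Pge: "nu^2 * (x \<bullet> x) \<le> x \<bullet> (P *v x)" for x
  proof -
    have "nu^2 * (x \<bullet> x) \<le> nu^2 * (x \<bullet> (Lam *v x))" using Lge[of x] nu2 by (intro mult_left_mono) auto
    then show ?thesis unfolding P_def HS_dot using sgram_psd[of "A *v x" m S] by simp
  qed
  have Hpd: "0 < x \<bullet> (H *v x)" if "x \<noteq> 0" for x
    using Hge[of x] nu2 that by (smt (verit) inner_gt_zero_iff mult_pos_pos)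
  have Ppd: "0 < x \<bullet> (P *v x)" if "x \<noteq> 0" for x
    using Pge[of x] nu2 that by (smt (verit) inner_gt_zero_iff mult_pos_pos)
  have Hpsd: "0 \<le> x \<bullet> (H *v x)" for x using Hpd[of x] by (cases "x = 0") auto
  have invH: "invertible H" by (rule pd_invertible[OF Hpd])
  have invP: "invertible P" by (rule pd_invertible[OF Ppd])
  have HK: "H *v (K *v x) = x" "K *v (H *v x) = x" for x
    unfolding K_def using minv_apply[OF invH] by auto
  have symK: "transpose K = K"
  proof (rule sym_from_dot)
    fix x y
    have "x \<bullet> (K *v y) = (H *v (K *v x)) \<bullet> (K *v y)" by (simp add: HK)
    also have "\<dots> = (K *v x) \<bullet> (H *v (K *v y))" using sym_dot[OF symH] by (simp add: inner_commute)
    also have "\<dots> = (K *v x) \<bullet> y" by (simp add: HK)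
    finally show "x \<bullet> (K *v y) = (K *v x) \<bullet> y" .
  qed
  have pdK: "0 < x \<bullet> (K *v x)" if "x \<noteq> 0" for x
  proof -
    have Kx: "K *v x \<noteq> 0" using HK(1)[of x] that by auto
    have "x \<bullet> (K *v x) = (K *v x) \<bullet> (H *v (K *v x))" by (simp add: HK inner_commute)
    then show ?thesis using Hpd[OF Kx] by simp
  qed
  have "psd_mat M \<and> M ** M = K"
    unfolding M_def inv_sqrt_mat_def K_def[symmetric]
    by (rule theI'[OF psd_sqrt_unique[OF symK pdK]])
  then have psdM: "psd_mat M" and MMK: "M ** M = K" by auto
  have symM: "transpose M = M" using psdM unfolding psd_mat_def by simp
  have bnd: "\<bar>z \<bullet> (P *v z) - z \<bullet> (H *v z)\<bar> \<le> s * (z \<bullet> (H *v z))" for z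
  proof -
    define y where "y = M *v (H *v z)"
    have My: "M *v y = z" unfolding y_def by (subst matrix_vector_mul_assoc) (simp add: MMK HK)
    have yCy: "y \<bullet> (C *v y) = z \<bullet> (P *v z)"
      unfolding C_def' by (simp add: My sym_dot[OF symM] flip: matrix_vector_mul_assoc)
    have yy: "y \<bullet> y = z \<bullet> (H *v z)"
    proof -
      have "y \<bullet> y = (M *v (H *v z)) \<bullet> y" unfolding y_def ..
      also have "\<dots> = (H *v z) \<bullet> (M *v y)" using sym_dot[OF symM] by simp
      finally show ?thesis using My by (simp add: inner_commute)
    qed
    have "\<bar>y \<bullet> ((C - mat 1) *v y)\<bar> \<le> norm y * norm ((C - mat 1) *v y)"
      by (rule Cauchy_Schwarz_ineq2)
    also have "norm ((C - mat 1) *v y) \<le> s * norm y"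
    proof -
      have "norm ((C - mat 1) *v y) \<le> onorm ((*v) (C - mat 1)) * norm y"
        by (rule onorm[OF matrix_vector_mul_bounded_linear])
      also have "\<dots> \<le> s * norm y"
        using assms(12) unfolding spec_norm_def C_def s_def
        by (intro mult_right_mono) (auto simp: eta_contract_eq)
      finally show ?thesis .
    qed
    then have "norm y * norm ((C - mat 1) *v y) \<le> norm y * (s * norm y)" by (intro mult_left_mono) auto
    also have "\<dots> = s * (y \<bullet> y)" by (simp add: power2_norm_eq_inner[symmetric] power2_eq_square)
    finally have "\<bar>y \<bullet> ((C - mat 1) *v y)\<bar> \<le> s * (y \<bullet> y)" .
    moreover have "y \<bullet> ((C - mat 1) *v y) = y \<bullet> (C *v y) - y \<bullet> y"
      by (simp add: matrix_vector_mult_diff_rdistrib inner_diff_right)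
    ultimately show ?thesis using yCy yy by simp
  qed
  have lo: "(1 - s) * (z \<bullet> (H *v z)) \<le> z \<bullet> (P *v z)" for z using bnd[of z] by (simp add: abs_le_iff algebra_simps)
  have hi: "z \<bullet> (P *v z) \<le> (1 + s) * (z \<bullet> (H *v z))" for z using bnd[of z] by (simp add: abs_le_iff algebra_simps)
  have cpos: "1 - s > 0" "1 + s > 0" using s0 s1 by auto
  note cmp = inv_compare[OF symH symP invP Hpsd cpos lo hi]
  define xs where "xs = xstar A Lam nu b"
  have grad: "gradf A Lam nu b x = H *v (x - xs)" for x
    unfolding gradf_def xs_def xstar_def H_def[symmetric] K_def[symmetric]
    by (simp add: matrix_vector_mult_diff_distrib HK)
  have dl: "delta A Lam nu b x = 1/2 * ((x - xs) \<bullet> (H *v (x - xs)))" for x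
    unfolding delta_def xs_def H_def ..
  have dt: "delta_tilde A Lam nu b m S x = 1/2 * ((H *v (x - xs)) \<bullet> (matrix_inv P *v (H *v (x - xs))))" for x
    unfolding delta_tilde_def grad P_def ..
  have T_le: "delta_tilde A Lam nu b m S x \<le> delta A Lam nu b x / (1 - s)" for x
  proof -
    have "1/2 * ((x - xs) \<bullet> (H *v (x - xs))) / (1 - s) = 1/2 * (((x - xs) \<bullet> (H *v (x - xs))) / (1 - s))"
      by simp
    then show ?thesis using cmp(1)[of "x - xs"] unfolding dt dl by linarith
  qed
  have D_le: "delta A Lam nu b x \<le> (1 + s) * delta_tilde A Lam nu b m S x" for x
    using cmp(2)[of "x - xs"] s0 s1 unfolding dt dl by (simp add: divide_le_eq mult.commute)
  have "spec_norm (CSmat A Lam nu m S - mat 1) \<le> max (sqrt rho) rho"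
    using assms(12) rhos unfolding s_def by simp
  then have conv: "delta A Lam nu b (iter psi P x0 t) \<le> alpha * phi rho ^ t * delta A Lam nu b x0"
    using assms(10,11) unfolding linear_conv_def P_def by blast
  have phipos: "phi rho > 0" using assms(5,6,7) by blast
  have af: "0 \<le> alpha * phi rho ^ t" using assms(8) phipos by simp
  have "delta_tilde A Lam nu b m S (iter psi P x0 t) \<le> delta A Lam nu b (iter psi P x0 t) / (1 - s)"
    by (rule T_le)
  also have "\<dots> \<le> alpha * phi rho ^ t * delta A Lam nu b x0 / (1 - s)"
    using conv s1 by (intro divide_right_mono) auto
  also have "\<dots> \<le> alpha * phi rho ^ t * ((1 + s) * delta_tilde A Lam nu b m S x0) / (1 - s)"
    using s1 af D_le[of x0] by (intro divide_right_mono mult_left_mono) auto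
  also have "\<dots> = ((1 + s) / (1 - s) * alpha) * phi rho ^ t * delta_tilde A Lam nu b m S x0"
    by (simp add: field_simps)
  finally show "delta_tilde A Lam nu b m S (iter psi (HSmat A Lam nu m S) x0 t)
           \<le> ((1 + sqrt rho) / (1 - sqrt rho) * alpha) * phi rho ^ t
              * delta_tilde A Lam nu b m S x0"
    unfolding P_def s_def .
qed

end
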